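(* (1) There is a one-to-one correspondence between finite positive integral frieze patterns of width $2n$ with principal growth coefficient $0$ and positive integral friezes on $P_n^\star$ where $\star$ has order $2$. (2) There is a one-to-one correspondence between finite positive integral frieze patterns of width $3n$ with principal growth coefficient $1$ and positive integral friezes on $P_n^\star$ where $\star$ has order $3$.
   Context: A finite positive integral frieze pattern of width $N$ is a function $F$ on $\{0\le j-i\le N\}$ with $F(i,i)=F(i,i+N)=0$, $F(i,i+1)=F(i,i+N-1)=1$, $F(i,j)F(i+1,j+1)-F(i+1,j)F(i,j+1)=1$ whenever defined, and positive integer entries for $0<j-i<N$. With quiddity $a_i=F(i-1,i+1)$, extend $F$ to all $j\ge i$ by $F(i,i)=0$, $F(i,i+1)=1$, $F(i,j+1)=a_jF(i,j)-F(i,j-1)$ (the tame extension); if $p$ is the minimal period of $(a_i)$, the principal growth coefficient is $F(i,i+p+1)-F(i+1,i+p)$, independent of $i$. Let $\lambda_p=2\cos(\pi/p)$. $P_n^\star$ is a polygon with vertices $v_0,\ldots,v_{n-1}$ and an interior orbifold point $\star$ of order $p$ (the quotient of $P_{pn}$ by rotation through $2\pi/p$). Its arcs are standard arcs $(v_i,v_j)$, $i\ne j$, from $v_i$ to $v_j$ with $v_{i+1},\ldots,v_{j-1}$ on the side not containing $\star$ (boundary segments when $j=i+1$), and pending arcs $(v_i,v_i)$, loops at $v_i$ cutting out a monogon containing $\star$. A frieze on $P_n^\star$ is a function $f$ from arcs to an integral domain with $f=1$ on boundary segments and respecting skein relations: for crossing arcs $\tau,\tau'$, $f(\tau)f(\tau')=f(\Gamma^+)+f(\Gamma^-)$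 where $\Gamma^\pm$ are obtained by the two smoothings of a crossing, $f$ multiplicative on multicurves, self-crossings smoothed recursively, contractible closed curves valued $-2$ and closed curves around $\star$ valued $\lambda_p$ (so $f(v_i,v_i)f(v_j,v_j)=f(v_i,v_j)^2+\lambda_pf(v_i,v_j)f(v_j,v_i)+f(v_j,v_i)^2$ for distinct pending arcs). It is positive integral if all its values are positive integers. *)

theory Defs
  imports Complex_Main
begin

text \<open>F is a function int => int => int;
  only the values on the domain 0 <= j - i <= N are meaningful, and we normalise F to be 0
  outside that domain so that distinct friezes are distinct functions.\<close>
definition finite_frieze :: "nat \<Rightarrow> (int \<Rightarrow> int \<Rightarrow> int) \<Rightarrow> bool" where
  "finite_frieze N F \<longleftrightarrow>
     (\<forall>i j. \<not> (0 \<le> j - i \<and> j - i \<le> int N) \<longrightarrow> F i j = 0) \<and>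
     (\<forall>i. F i i = 0 \<and> F i (i + int N) = 0 \<and> F i (i + 1) = 1 \<and> F i (i + int N - 1) = 1) \<and>
     (\<forall>i j. i + 1 \<le> j \<and> j \<le> i + int N - 1 \<longrightarrow>
            F i j * F (i + 1) (j + 1) - F (i + 1) j * F i (j + 1) = 1) \<and>
     (\<forall>i j. 0 < j - i \<and> j - i < int N \<longrightarrow> F i j > 0)"

definition quiddity :: "(int \<Rightarrow> int \<Rightarrow> int) \<Rightarrow> int \<Rightarrow> int" where
  "quiddity F i = F (i - 1) (i + 1)"

text \<open>Tame extension: tame_ext a i k = F(i, i+k), with F(i,i)=0, F(i,i+1)=1,
  F(i,j+1) = a_j F(i,j) - F(i,j-1).\<close>
fun tame_ext :: "(int \<Rightarrow> int) \<Rightarrow> int \<Rightarrow> nat \<Rightarrow> int" where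
  "tame_ext a i 0 = 0"
| "tame_ext a i (Suc 0) = 1"
| "tame_ext a i (Suc (Suc k)) = a (i + int k + 1) * tame_ext a i (Suc k) - tame_ext a i k"

definition min_period :: "(int \<Rightarrow> int) \<Rightarrow> nat" where
  "min_period a = (LEAST p. 0 < p \<and> (\<forall>i. a (i + int p) = a i))"

text \<open>Principal growth coefficient F(i,i+p+1) - F(i+1,i+p) (taken at i = 0).\<close>
definition principal_growth :: "(int \<Rightarrow> int \<Rightarrow> int) \<Rightarrow> int" where
  "principal_growth F =
     (let a = quiddity F; p = min_period a
      in tame_ext a 0 (p + 1) - tame_ext a 1 (p - 1))"

definition lambda_p :: "nat \<Rightarrow> real" where
  "lambda_p p = 2 * cos (pi / real p)"

text \<open>Arcs of P_n^star: the pair (i,j) with i,j < n stands for the arc (v_i,v_j)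
  (standard if i ~= j, boundary segment if j = i+1 mod n, pending if i = j).

  Curves are handled through the p-fold orbifold cover P_{pn} (vertices = integers mod pn,
  the vertex x lying over v_(x mod n)).  star_curve_val p n f x y is the value of the image
  in P_n^star of the straight segment from x to y in P_{pn}:
  if 0 < (y-x) mod pn <= n it is the arc (v_x, v_y); if it is >= (p-1)n it is the arc
  (v_y, v_x); otherwise (only possible for p = 3) it is a curve with exactly one
  self-crossing, whose recursive smoothing gives lambda_p f(v_x,v_y) + f(v_y,v_x).
  This description of the self-crossing curves is valid for p in {2,3} only.\<close>
definition star_curve_val :: "nat \<Rightarrow> nat \<Rightarrow> (nat \<Rightarrow> nat \<Rightarrow> int) \<Rightarrow> int \<Rightarrow> int \<Rightarrow> real" where
  "star_curve_val p n f x y =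
     (let d = (y - x) mod (int p * int n); i = nat (x mod int n); j = nat (y mod int n)
      in if d \<le> int n then real_of_int (f i j)
         else if d \<ge> (int p - 1) * int n then real_of_int (f j i)
         else lambda_p p * real_of_int (f i j) + real_of_int (f j i))"

text \<open>Lifted arc: the segment from x to y (0 < y - x < pn) is (the lift of) an arc of P_n^star.\<close>
definition star_is_arc :: "nat \<Rightarrow> nat \<Rightarrow> int \<Rightarrow> bool" where
  "star_is_arc p n d \<longleftrightarrow> d \<le> int n \<or> d \<ge> (int p - 1) * int n"

text \<open>Skein relations: every crossing of two arcs of P_n^star lifts to a crossing of two
  diagonals (a,c), (b,d) of P_{pn} with a < b < c < d < a + pn; the two smoothings give
  the (images of the) pairs (a,b),(c,d) and (a,d),(b,c).\<close>
definition star_skein :: "nat \<Rightarrow> nat \<Rightarrow> (nat \<Rightarrow> nat \<Rightarrow> int) \<Rightarrow> bool" where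
  "star_skein p n f \<longleftrightarrow>
     (\<forall>a b c d. a < b \<and> b < c \<and> c < d \<and> d < a + int p * int n \<and>
        star_is_arc p n (c - a) \<and> star_is_arc p n (d - b) \<longrightarrow>
        star_curve_val p n f a c * star_curve_val p n f b d =
          star_curve_val p n f a b * star_curve_val p n f c d
          + star_curve_val p n f a d * star_curve_val p n f b c)"

definition star_frieze :: "nat \<Rightarrow> nat \<Rightarrow> (nat \<Rightarrow> nat \<Rightarrow> int) \<Rightarrow> bool" where
  "star_frieze p n f \<longleftrightarrow>
     (\<forall>i j. \<not> (i < n \<and> j < n) \<longrightarrow> f i j = 0) \<and>
     (\<forall>i < n. f i (Suc i mod n) = 1) \<and>
     (\<forall>i j. i < n \<and> j < n \<longrightarrow> f i j > 0) \<and>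
     star_skein p n f"

end

theory Submission
  imports Defs
begin


fun fw :: "(int \<Rightarrow> int) \<Rightarrow> int \<Rightarrow> int \<Rightarrow> nat \<Rightarrow> int" where
  "fw a c0 c1 0 = c0"
| "fw a c0 c1 (Suc 0) = c1"
| "fw a c0 c1 (Suc (Suc k)) = a (int k + 1) * fw a c0 c1 (Suc k) - fw a c0 c1 k"

fun bw :: "(int \<Rightarrow> int) \<Rightarrow> int \<Rightarrow> int \<Rightarrow> nat \<Rightarrow> int" where
  "bw a c0 c1 0 = c0"
| "bw a c0 c1 (Suc 0) = a 0 * c0 - c1"
| "bw a c0 c1 (Suc (Suc k)) = a (- int k - 1) * bw a c0 c1 (Suc k) - bw a c0 c1 k"

definition sol :: "(int \<Rightarrow> int) \<Rightarrow> int \<Rightarrow> int \<Rightarrow> int \<Rightarrow> int" where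
  "sol a c0 c1 j = (if 0 \<le> j then fw a c0 c1 (nat j) else bw a c0 c1 (nat (-j)))"

lemma sol_rec: "sol a c0 c1 (j+1) = a j * sol a c0 c1 j - sol a c0 c1 (j - 1)"
proof (cases "j \<ge> 1")
  case True
  define k where "k = nat (j - 1)"
  have k: "j = int k + 1" using True by (simp add: k_def)
  have e: "nat (j+1) = Suc (Suc k)" "nat j = Suc k" "nat (j-1) = k" using k by auto
  have "sol a c0 c1 (j+1) = fw a c0 c1 (nat (j+1))" "sol a c0 c1 j = fw a c0 c1 (nat j)"
    "sol a c0 c1 (j-1) = fw a c0 c1 (nat (j-1))" using True by (auto simp: sol_def)
  then show ?thesis unfolding e using k by simp
next
  case False
  show ?thesis
  proof (cases "j = 0")
    case True then show ?thesis by (simp add: sol_def)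
  next
    case False
    define k where "k = nat (- j - 1)"
    have k: "j = - int k - 1" using False \<open>\<not> j \<ge> 1\<close> by (simp add: k_def)
    have e1: "j - 1 = - int (Suc (Suc k))" "j = - int (Suc k)" using k by auto
    have e2: "nat (- (j-1)) = Suc (Suc k)" "nat (-j) = Suc k" using k by auto
    have "sol a c0 c1 (j - 1) = bw a c0 c1 (nat (- (j-1)))" "sol a c0 c1 j = bw a c0 c1 (nat (-j))"
      using k by (auto simp: sol_def)
    then have "sol a c0 c1 (j - 1) = bw a c0 c1 (Suc (Suc k))" "sol a c0 c1 j = bw a c0 c1 (Suc k)"
      unfolding e2 by auto
    moreover have "sol a c0 c1 (- int k) = bw a c0 c1 k" by (cases k) (simp_all add: sol_def nat_add_distrib del: of_nat_Suc)
    moreover have "j + 1 = - int k" "a j = a (- int k - 1)" using k by simp_all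
    ultimately show ?thesis by simp
  qed
qed

lemma sol_0 [simp]: "sol a c0 c1 0 = c0" by (simp add: sol_def)
lemma sol_1 [simp]: "sol a c0 c1 1 = c1" by (simp add: sol_def)

lemma rec_zero:
  fixes w a :: "int \<Rightarrow> int" and b :: int
  assumes r: "\<And>j. w (j+1) = a j * w j - w (j-1)" and z: "w b = 0" "w (b+1) = 0"
  shows "w j = 0"
proof -
  have up: "w (b + int k) = 0 \<and> w (b + int k + 1) = 0" for k
  proof (induction k)
    case 0 then show ?case using z by simp
  next
    case (Suc k)
    have "w (b + int k + 1 + 1) = a (b + int k + 1) * w (b + int k + 1) - w (b + int k + 1 - 1)" by (rule r)
    then have "w (b + int k + 2) = 0" using Suc by (simp add: algebra_simps)
    then show ?case using Suc by (simp add: algebra_simps)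
  qed
  have dn: "w (b - int k) = 0 \<and> w (b - int k + 1) = 0" for k
  proof (induction k)
    case 0 then show ?case using z by simp
  next
    case (Suc k)
    have "w (b - int k + 1) = a (b - int k) * w (b - int k) - w (b - int k - 1)" by (rule r)
    then have "w (b - int k - 1) = 0" using Suc by simp
    then show ?case using Suc by (simp add: algebra_simps)
  qed
  show ?thesis
  proof (cases "j \<ge> b")
    case True
    then have "j = b + int (nat (j - b))" by simp
    then show ?thesis using up by metis
  next
    case False
    then have "j = b - int (nat (b - j))" by simp
    then show ?thesis using dn by metis
  qed
qed

definition X :: "(int \<Rightarrow> int) \<Rightarrow> int \<Rightarrow> int" where "X a = sol a 1 0"
definition Y :: "(int \<Rightarrow> int) \<Rightarrow> int \<Rightarrow> int" where "Y a = sol a 0 1"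
definition G :: "(int \<Rightarrow> int) \<Rightarrow> int \<Rightarrow> int \<Rightarrow> int" where
  "G a x y = X a x * Y a y - Y a x * X a y"

lemma X_rec: "X a (j+1) = a j * X a j - X a (j-1)" unfolding X_def by (rule sol_rec)
lemma Y_rec: "Y a (j+1) = a j * Y a j - Y a (j-1)" unfolding Y_def by (rule sol_rec)

lemma G_self [simp]: "G a x x = 0" by (simp add: G_def)
lemma G_anti: "G a y x = - G a x y" by (simp add: G_def)
lemma G_rec: "G a x (y+1) = a y * G a x y - G a x (y-1)"
  unfolding G_def X_rec Y_rec by (simp add: algebra_simps)
lemma G_rec': "G a (y+1) x = a y * G a y x - G a (y-1) x"
  unfolding G_def X_rec Y_rec by (simp add: algebra_simps)

lemma G_plucker: "G a x z * G a y w = G a x y * G a z w + G a x w * G a y z"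
  unfolding G_def by (simp add: algebra_simps)

lemma G_cramerX: "G a x y * X a z = G a z y * X a x + G a x z * X a y"
  unfolding G_def by (simp add: algebra_simps)
lemma G_cramerY: "G a x y * Y a z = G a z y * Y a x + G a x z * Y a y"
  unfolding G_def by (simp add: algebra_simps)

lemma G_wronski: "G a x (x+1) = 1"
proof -
  have "G a x (x+1) - 1 = 0" for x
  proof -
    have "w x = 0" if "w = (\<lambda>x. G a x (x+1) - 1)" for w
    proof -
      have c: "w (j+1) = w j" for j
      proof -
        have "G a (j+1) (j+1+1) = a (j+1) * G a (j+1) (j+1) - G a (j+1) (j+1-1)" by (rule G_rec)
        then have "G a (j+1) (j+1+1) = G a j (j+1)" using G_anti[of a j "j+1"] by simp
        then show ?thesis unfolding that by simp
      qed
      have up: "w (int k) = w 0" for k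
      proof (induction k)
        case (Suc k)
        have "w (int (Suc k)) = w (int k + 1)" by (simp add: add.commute)
        also have "\<dots> = w (int k)" by (rule c)
        finally show ?case using Suc by simp
      qed simp
      have dn: "w (- int k) = w 0" for k
      proof (induction k)
        case (Suc k)
        have "w (- int k) = w (- int (Suc k) + 1)" by simp
        also have "\<dots> = w (- int (Suc k))" by (rule c)
        finally show ?case using Suc by simp
      qed simp
      have "w 0 = 0" unfolding that by (simp add: G_def X_def Y_def)
      moreover have "w x = w 0"
      proof (cases "x \<ge> 0")
        case True then show ?thesis using up[of "nat x"] by simp
      next
        case False then show ?thesis using dn[of "nat (-x)"] by simp
      qed
      ultimately show ?thesis by simp
    qed
    then show ?thesis by simp
  qed
  then show ?thesis by simp
qed



lemma tame_G: "tame_ext a x k = G a x (x + int k)"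
proof (induction a x k rule: tame_ext.induct)
  case (1 a i) then show ?case by simp
next
  case (2 a i) then show ?case by (simp add: G_wronski)
next
  case (3 a i k)
  have "G a i (i + int k + 1 + 1) = a (i + int k + 1) * G a i (i + int k + 1) - G a i (i + int k + 1 - 1)"
    by (rule G_rec)
  then show ?case using 3 by (simp add: algebra_simps)
qed

lemma X_G: "X a y = - G a 1 y" and Y_G: "Y a y = G a 0 y"
  by (simp_all add: G_def X_def Y_def)

lemma G_shift:
  assumes per: "\<And>j. a (j + q) = a j"
  shows "G a (x+q) (y+q) = G a x y"
proof -
  define w where "w y = G a (x+q) (y+q) - G a x y" for y
  have r: "w (j+1) = a j * w j - w (j-1)" for j
  proof -
    have "G a (x+q) (j+q+1) = a (j+q) * G a (x+q) (j+q) - G a (x+q) (j+q-1)" by (rule G_rec)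
    moreover have "G a x (j+1) = a j * G a x j - G a x (j-1)" by (rule G_rec)
    ultimately show ?thesis unfolding w_def per by (simp add: algebra_simps)
  qed
  have "w x = 0" "w (x+1) = 0" unfolding w_def using G_wronski[of a x] G_wronski[of a "x+q"]
    by (simp_all add: algebra_simps)
  from rec_zero[of w a, OF r this] show ?thesis unfolding w_def by simp
qed

lemma G_01: "G a 0 1 = 1" and G_10: "G a 1 0 = -1"
  using G_wronski[of a 0] G_anti[of a 0 1] by auto

lemma XY_nz: "X a j \<noteq> 0 \<or> Y a j \<noteq> 0"
  using G_wronski[of a j] unfolding G_def by auto

lemma trace_XY:
  assumes per: "\<And>j. a (j + q) = a j"
  defines "t \<equiv> G a 0 (q+1) - G a 1 q"
  shows "X a (j+q) + X a (j-q) = t * X a j" "Y a (j+q) + Y a (j-q) = t * Y a j"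
proof -
  have per': "a (j - q) = a j" for j using per[of "j-q"] by simp
  define w where "w j = X a (j+q) + X a (j-q) - t * X a j" for j
  have r: "w (j+1) = a j * w j - w (j-1)" for j
  proof -
    have e1: "X a (j+1+q) = a (j+q) * X a (j+q) - X a (j-1+q)" using X_rec[of a "j+q"] by (simp add: algebra_simps)
    have e2: "X a (j+1-q) = a j * X a (j-q) - X a (j-1-q)" using X_rec[of a "j-q"] per' by (simp add: algebra_simps)
    have e3: "t * X a (j+1) = t * (a j * X a j - X a (j-1))" using X_rec[of a j] by simp
    show ?thesis unfolding w_def e1 e2 e3 per by (simp add: algebra_simps)
  qed
  have s1: "G a 1 (-q) = - G a 0 (1+q)"
    using G_shift[of a q 1 "-q", OF per] G_anti[of a "1+q" 0] by simp
  have s2: "G a 1 (1-q) = - G a 1 (1+q)"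
    using G_shift[of a q 1 "1-q", OF per] G_anti[of a "1+q" 1] by simp
  have "w 0 = 0" "w (0+1) = 0" unfolding w_def X_G t_def using s1 s2 G_10[of a]
    by (simp_all add: algebra_simps)
  from rec_zero[of w a 0, OF r this] show "X a (j+q) + X a (j-q) = t * X a j" unfolding w_def by simp
  define u where "u j = Y a (j+q) + Y a (j-q) - t * Y a j" for j
  have r2: "u (j+1) = a j * u j - u (j-1)" for j
  proof -
    have e1: "Y a (j+1+q) = a (j+q) * Y a (j+q) - Y a (j-1+q)" using Y_rec[of a "j+q"] by (simp add: algebra_simps)
    have e2: "Y a (j+1-q) = a j * Y a (j-q) - Y a (j-1-q)" using Y_rec[of a "j-q"] per' by (simp add: algebra_simps)
    have e3: "t * Y a (j+1) = t * (a j * Y a j - Y a (j-1))" using Y_rec[of a j] by simp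
    show ?thesis unfolding u_def e1 e2 e3 per by (simp add: algebra_simps)
  qed
  have s3: "G a 0 (-q) = - G a 0 q"
    using G_shift[of a q 0 "-q", OF per] G_anti[of a q 0] by simp
  have s4: "G a 0 (1-q) = - G a 1 q"
    using G_shift[of a q 0 "1-q", OF per] G_anti[of a q 1] by simp
  have "u 0 = 0" "u (0+1) = 0" unfolding u_def Y_G t_def using s3 s4 G_01[of a]
    by (simp_all add: algebra_simps)
  from rec_zero[of u a 0, OF r2 this] show "Y a (j+q) + Y a (j-q) = t * Y a j" unfolding u_def by simp
qed

lemma trace_G:
  assumes per: "\<And>j. a (j + q) = a j"
  shows "G a x (y+q) + G a x (y-q) = (G a 0 (q+1) - G a 1 q) * G a x y"
proof -
  note h = trace_XY[of a q y, OF per]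
  have "G a x (y+q) + G a x (y-q) = X a x * (Y a (y+q) + Y a (y-q)) - Y a x * (X a (y+q) + X a (y-q))"
    unfolding G_def by (simp add: algebra_simps)
  also have "\<dots> = (G a 0 (q+1) - G a 1 q) * G a x y" unfolding h G_def[of a x y] by (simp add: algebra_simps)
  finally show ?thesis .
qed



lemma frieze_rec:
  fixes F :: "int \<Rightarrow> int \<Rightarrow> int" and M :: int
  assumes zero: "\<And>x. F x x = 0"
    and one: "\<And>x. F x (x+1) = 1"
    and det: "\<And>i j. 1 \<le> j - i \<Longrightarrow> j - i \<le> M \<Longrightarrow> F i j * F (i+1) (j+1) - F (i+1) j * F i (j+1) = 1"
    and pos: "\<And>i j. 1 \<le> j - i \<Longrightarrow> j - i \<le> M - 1 \<Longrightarrow> F i j > 0"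
  shows "1 \<le> j - i \<Longrightarrow> j - i \<le> M \<Longrightarrow> F i (j-1) + F i (j+1) = quiddity F j * F i j"
proof -
  have P: "\<forall>i. j - i = int m + 1 \<longrightarrow> int m + 1 \<le> M \<longrightarrow> F i (j-1) + F i (j+1) = quiddity F j * F i j" for m
  proof (induction m)
    case 0
    show ?case
    proof (intro allI impI)
      fix i assume "j - i = int 0 + 1"
      then have i: "i = j - 1" by simp
      have "F (j-1) (j-1) = 0" by (rule zero)
      moreover have "F (j-1) (j-1+1) = 1" by (rule one)
      ultimately show "F i (j-1) + F i (j+1) = quiddity F j * F i j"
        unfolding i quiddity_def by simp
    qed
  next
    case (Suc m)
    show ?case
    proof (intro allI impI)
      fix i assume h1: "j - i = int (Suc m) + 1" and h2: "int (Suc m) + 1 \<le> M"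
      have IH: "F (i+1) (j-1) + F (i+1) (j+1) = quiddity F j * F (i+1) j"
        using Suc h1 h2 by auto
      have d1: "F i (j-1) * F (i+1) (j-1+1) - F (i+1) (j-1) * F i (j-1+1) = 1"
        by (rule det) (use h1 h2 in auto)
      have d2: "F i j * F (i+1) (j+1) - F (i+1) j * F i (j+1) = 1"
        by (rule det) (use h1 h2 in auto)
      have p: "F (i+1) j > 0" by (rule pos) (use h1 h2 in auto)
      have "F (i+1) j * (F i (j-1) + F i (j+1)) = F i j * (F (i+1) (j-1) + F (i+1) (j+1))"
        using d1 d2 by (simp add: algebra_simps)
      also have "\<dots> = F (i+1) j * (quiddity F j * F i j)" unfolding IH by (simp add: algebra_simps)
      finally show "F i (j-1) + F i (j+1) = quiddity F j * F i j" using p by simp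
    qed
  qed
  assume "1 \<le> j - i" "j - i \<le> M"
  then show ?thesis using P[of "nat (j - i - 1)"] by simp
qed

lemma frieze_tame:
  fixes F :: "int \<Rightarrow> int \<Rightarrow> int" and M :: int
  assumes zero: "\<And>x. F x x = 0"
    and one: "\<And>x. F x (x+1) = 1"
    and det: "\<And>i j. 1 \<le> j - i \<Longrightarrow> j - i \<le> M \<Longrightarrow> F i j * F (i+1) (j+1) - F (i+1) j * F i (j+1) = 1"
    and pos: "\<And>i j. 1 \<le> j - i \<Longrightarrow> j - i \<le> M - 1 \<Longrightarrow> F i j > 0"
  shows "int k \<le> M + 1 \<Longrightarrow> F x (x + int k) = G (quiddity F) x (x + int k)"
proof (induction k rule: nat_less_induct)
  case (1 k)
  show ?case
  proof (cases k)
    case 0 then show ?thesis using zero by simp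
  next
    case (Suc k')
    show ?thesis
    proof (cases k')
      case 0 then show ?thesis using Suc one G_wronski by simp
    next
      case (Suc k'')
      have r: "F x (x + int k'' + 1 - 1) + F x (x + int k'' + 1 + 1) = quiddity F (x + int k'' + 1) * F x (x + int k'' + 1)"
        by (rule frieze_rec[of F M, OF zero one det pos]) (use 1 \<open>k = Suc k'\<close> Suc in auto)
      have i1: "F x (x + int k'') = G (quiddity F) x (x + int k'')" using 1 \<open>k = Suc k'\<close> Suc by auto
      have i2: "F x (x + int (Suc k'')) = G (quiddity F) x (x + int (Suc k''))" using 1 \<open>k = Suc k'\<close> Suc by auto
      have g: "G (quiddity F) x (x + int k'' + 1 + 1) = quiddity F (x + int k'' + 1) * G (quiddity F) x (x + int k'' + 1) - G (quiddity F) x (x + int k'' + 1 - 1)"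
        by (rule G_rec)
      have "F x (x + int k'' + 1 + 1) = G (quiddity F) x (x + int k'' + 1 + 1)"
        using r i1 i2 g by (simp add: algebra_simps)
      then show ?thesis using \<open>k = Suc k'\<close> Suc by (simp add: algebra_simps)
    qed
  qed
qed



lemma per_mult:
  fixes a :: "int \<Rightarrow> int"
  assumes per: "\<And>j. a (j + q) = a j"
  shows "a (j + q * c) = a j"
proof -
  have up: "a (j + q * int k) = a j" for j k
  proof (induction k arbitrary: j)
    case (Suc k)
    have "a (j + q * int (Suc k)) = a ((j + q * int k) + q)" by (simp add: algebra_simps)
    then show ?case using per Suc by simp
  qed simp
  show ?thesis
  proof (cases "c \<ge> 0")
    case True then show ?thesis using up[of j "nat c"] by simp
  next
    case False
    have "a ((j + q * c) + q * int (nat (-c))) = a (j + q * c)" by (rule up)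
    moreover have "(j + q * c) + q * int (nat (-c)) = j" using False by (simp add: algebra_simps)
    ultimately show ?thesis by (metis (no_types))
  qed
qed

lemma G_shift_mult:
  assumes per: "\<And>j. a (j + q) = a j"
  shows "G a (x + q * c) (y + q * c) = G a x y"
  by (rule G_shift, rule per_mult[of a q, OF per])

lemma ff_props:
  assumes "finite_frieze N F"
  shows ff_out: "\<And>i j. \<not> (0 \<le> j - i \<and> j - i \<le> int N) \<Longrightarrow> F i j = 0"
    and ff_zero: "\<And>i. F i i = 0" and ff_zeroN: "\<And>i. F i (i + int N) = 0"
    and ff_one: "\<And>i. F i (i + 1) = 1" and ff_oneN: "\<And>i. F i (i + int N - 1) = 1"
    and ff_det: "\<And>i j. i + 1 \<le> j \<Longrightarrow> j \<le> i + int N - 1 \<Longrightarrow>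
            F i j * F (i + 1) (j + 1) - F (i + 1) j * F i (j + 1) = 1"
    and ff_pos: "\<And>i j. 0 < j - i \<Longrightarrow> j - i < int N \<Longrightarrow> F i j > 0"
  using assms unfolding finite_frieze_def by auto

lemma ff_G:
  assumes ff: "finite_frieze N F" and N: "N \<ge> 2"
    and "0 \<le> y - x" "y - x \<le> int N"
  shows "F x y = G (quiddity F) x y"
proof -
  have "F x (x + int (nat (y - x))) = G (quiddity F) x (x + int (nat (y - x)))"
  proof (rule frieze_tame[of F "int N - 1"])
    show "F x x = 0" for x using ff_zero[OF ff] .
    show "F x (x+1) = 1" for x using ff_one[OF ff] .
    show "F i j * F (i + 1) (j + 1) - F (i + 1) j * F i (j + 1) = 1" if "1 \<le> j - i" "j - i \<le> int N - 1" for i j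
      using ff_det[OF ff] that by auto
    show "0 < F i j" if "1 \<le> j - i" "j - i \<le> int N - 1 - 1" for i j
      using ff_pos[OF ff] that by auto
    show "int (nat (y - x)) \<le> int N - 1 + 1" using assms by simp
  qed
  then show ?thesis using assms by simp
qed

lemma ff_anti:
  assumes ff: "finite_frieze N F" and N: "N \<ge> 2"
  defines "a \<equiv> quiddity F"
  shows "X a (x + int N) = - X a x" "Y a (x + int N) = - Y a x"
proof -
  have g1: "G a x (x+1) = 1" by (rule G_wronski)
  have "F (x+1) (x + int N) = G a (x+1) (x + int N)"
    unfolding a_def by (rule ff_G[OF ff N]) (use N in auto)
  moreover have "F (x+1) (x + int N) = 1" using ff_oneN[OF ff, of "x+1"] by (simp add: algebra_simps)
  ultimately have g2: "G a (x + int N) (x+1) = -1"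
    using G_anti[of a "x+1" "x + int N"] by simp
  have "F x (x + int N) = G a x (x + int N)"
    unfolding a_def by (rule ff_G[OF ff N]) (use N in auto)
  then have g3: "G a x (x + int N) = 0" using ff_zeroN[OF ff, of x] by simp
  show "X a (x + int N) = - X a x" using G_cramerX[of a x "x+1" "x + int N"] g1 g2 g3 by simp
  show "Y a (x + int N) = - Y a x" using G_cramerY[of a x "x+1" "x + int N"] g1 g2 g3 by simp
qed

lemma ff_G_anti:
  assumes ff: "finite_frieze N F" and N: "N \<ge> 2"
  shows "G (quiddity F) x (y + int N) = - G (quiddity F) x y"
    "G (quiddity F) (x + int N) y = - G (quiddity F) x y"
  unfolding G_def using ff_anti[OF ff N] by simp_all

lemma ff_per:
  assumes ff: "finite_frieze N F" and N: "N \<ge> 2"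
  shows "quiddity F (j + int N) = quiddity F j"
proof -
  let ?a = "quiddity F"
  have "?a (j + int N) * X ?a (j + int N) = X ?a (j + int N + 1) + X ?a (j + int N - 1)"
    using X_rec[of ?a "j + int N"] by simp
  moreover have "X ?a (j + int N + 1) = - X ?a (j+1)" "X ?a (j + int N - 1) = - X ?a (j-1)"
    using ff_anti(1)[OF ff N, of "j+1"] ff_anti(1)[OF ff N, of "j-1"] by (simp_all add: algebra_simps)
  ultimately have x: "?a (j + int N) * X ?a j = ?a j * X ?a j"
    using X_rec[of ?a j] ff_anti(1)[OF ff N, of j] by (simp add: algebra_simps)
  have "?a (j + int N) * Y ?a (j + int N) = Y ?a (j + int N + 1) + Y ?a (j + int N - 1)"
    using Y_rec[of ?a "j + int N"] by simp
  moreover have "Y ?a (j + int N + 1) = - Y ?a (j+1)" "Y ?a (j + int N - 1) = - Y ?a (j-1)"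
    using ff_anti(2)[OF ff N, of "j+1"] ff_anti(2)[OF ff N, of "j-1"] by (simp_all add: algebra_simps)
  ultimately have y: "?a (j + int N) * Y ?a j = ?a j * Y ?a j"
    using Y_rec[of ?a j] ff_anti(2)[OF ff N, of j] by (simp add: algebra_simps)
  show ?thesis using x y XY_nz[of ?a j] by auto
qed

lemma minper:
  fixes a :: "int \<Rightarrow> int"
  assumes P: "0 < P" and per: "\<And>i. a (i + int P) = a i"
  shows "0 < min_period a" "\<And>i. a (i + int (min_period a)) = a i" "min_period a dvd P"
proof -
  let ?Q = "\<lambda>p. 0 < p \<and> (\<forall>i. a (i + int p) = a i)"
  have ex: "?Q P" using P per by simp
  have q: "?Q (min_period a)" unfolding min_period_def by (rule LeastI[of ?Q, OF ex])
  then show "0 < min_period a" "\<And>i. a (i + int (min_period a)) = a i" by auto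
  let ?q = "min_period a"
  define r where "r = P mod ?q"
  have "r < ?q" unfolding r_def using q by simp
  have rp: "a (i + int r) = a i" for i
  proof -
    have "a (i + int r) = a (i + int r + int ?q * int (P div ?q))"
      using per_mult[of a "int ?q" "i + int r" "int (P div ?q)"] q by simp
    also have "int r + int ?q * int (P div ?q) = int P"
      unfolding r_def by (metis mod_mult_div_eq of_nat_add of_nat_mult)
    then have "i + int r + int ?q * int (P div ?q) = i + int P" by simp
    finally show ?thesis using per by simp
  qed
  have "r = 0"
  proof (rule ccontr)
    assume "r \<noteq> 0"
    then have "?Q r" using rp by simp
    then have "?q \<le> r" unfolding min_period_def by (rule Least_le)
    with \<open>r < ?q\<close> show False by simp
  qed
  then show "min_period a dvd P" unfolding r_def by auto
qed



lemma growth_G: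
  assumes "0 < min_period (quiddity F)"
  shows "principal_growth F = G (quiddity F) 0 (int (min_period (quiddity F)) + 1) - G (quiddity F) 1 (int (min_period (quiddity F)))"
  using assms unfolding principal_growth_def Let_def tame_G by (simp add: algebra_simps of_nat_diff)

lemma fwd_period:
  assumes p: "p = 2 \<or> p = 3" and n: "n \<ge> 1" and ff: "finite_frieze (p*n) F"
    and gr: "principal_growth F = int p - 2"
  shows "min_period (quiddity F) = n"
proof -
  define N where "N = p * n"
  define a where "a = quiddity F"
  have N2: "N \<ge> 2" unfolding N_def using p n by auto
  have ff': "finite_frieze N F" using ff unfolding N_def .
  have perN: "a (i + int N) = a i" for i unfolding a_def by (rule ff_per[OF ff' N2])
  define q where "q = min_period a"
  have q0: "0 < q" and perq: "\<And>i. a (i + int q) = a i" and qd: "q dvd N"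
    using minper[of N a, OF _ perN] N2 unfolding q_def by auto
  define t where "t = G a 0 (int q + 1) - G a 1 (int q)"
  have tp: "t = int p - 2" using gr growth_G[of F] q0 unfolding t_def q_def a_def by simp
  have tr: "G a x (y + int q) + G a x (y - int q) = t * G a x y" for x y
    unfolding t_def by (rule trace_G[of a "int q", OF perq])
  have FG: "F x y = G a x y" if "0 \<le> y - x" "y - x \<le> int N" for x y
    unfolding a_def by (rule ff_G[OF ff' N2 that])
  have qN: "q \<noteq> N"
  proof
    assume "q = N"
    have "G a 0 (int N + 1) = - G a 0 1" using ff_G_anti(1)[OF ff' N2, of 0 1] unfolding a_def by (simp add: add.commute)
    moreover have "F 1 (int N) = G a 1 (int N)" by (rule FG) (use N2 in auto)
    moreover have "F 1 (int N) = 1" using ff_oneN[OF ff', of 1] by simp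
    ultimately have "t = -2" unfolding t_def \<open>q = N\<close> using G_01[of a] by simp
    with tp p show False by auto
  qed
  have qle: "q \<le> N" using qd N2 by (simp add: dvd_imp_le)
  with qN have qlt: "q < N" by simp
  obtain k where k: "N = q * k" using qd by blast
  have k2: "k \<ge> 2" using k qlt q0 by (cases k; cases "k - 1"; auto)
  have g1: "G a 0 (int q) > 0"
  proof -
    have "F 0 (int q) = G a 0 (int q)" by (rule FG) (use qlt in auto)
    moreover have "F 0 (int q) > 0" by (rule ff_pos[OF ff']) (use qlt q0 in auto)
    ultimately show ?thesis by simp
  qed
  have g2: "G a 0 (2 * int q) = t * G a 0 (int q)"
  proof -
    have e: "int q + int q = 2 * int q" "int q - int q = 0" by simp_all
    show ?thesis using tr[of 0 "int q"] unfolding e by simp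
  qed
  have g3: "G a 0 (3 * int q) = t * G a 0 (2 * int q) - G a 0 (int q)"
  proof -
    have e: "2 * int q + int q = 3 * int q" "2 * int q - int q = int q" by simp_all
    show ?thesis using tr[of 0 "2 * int q"] unfolding e by simp
  qed
  have Gm: "G a 0 (int m * int q) > 0" if "m * q < N" "m > 0" for m
  proof -
    have "0 < m * q" using that q0 by simp
    have lt: "int m * int q < int N" using that by (simp add: of_nat_mult[symmetric] del: of_nat_mult)
    have "F 0 (int m * int q) = G a 0 (int m * int q)" by (rule FG) (use lt in auto)
    moreover have "F 0 (int m * int q) > 0" by (rule ff_pos[OF ff']) (use lt \<open>0 < m * q\<close> in auto)
    ultimately show ?thesis by simp
  qed
  have GN: "G a 0 (int N) = 0"
  proof -
    have "F 0 (int N) = G a 0 (int N)" by (rule FG) auto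
    then show ?thesis using ff_zeroN[OF ff', of 0] by simp
  qed
  from p show ?thesis
  proof
    assume p2: "p = 2"
    then have t0: "t = 0" using tp by simp
    have "k = 2"
    proof (rule ccontr)
      assume "k \<noteq> 2" with k2 have "k \<ge> 3" by simp
      then have "2 * q < N" using k q0 by (simp add: algebra_simps)
      from Gm[OF this] g2 t0 show False by simp
    qed
    then show ?thesis using k p2 unfolding N_def q_def a_def by simp
  next
    assume p3: "p = 3"
    then have t1: "t = 1" using tp by simp
    have "k \<noteq> 2"
    proof
      assume "k = 2"
      then have "int N = 2 * int q" using k by simp
      then show False using GN g2 g1 t1 by simp
    qed
    have "k = 3"
    proof (rule ccontr)
      assume "k \<noteq> 3" with k2 \<open>k \<noteq> 2\<close> have "k \<ge> 4" by simp
      then have "3 * q < N" using k q0 by (simp add: algebra_simps)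
      from Gm[OF this] g3 g2 t1 show False by simp
    qed
    then show ?thesis using k p3 unfolding N_def q_def a_def by simp
  qed
qed



definition Phi :: "nat \<Rightarrow> (int \<Rightarrow> int \<Rightarrow> int) \<Rightarrow> nat \<Rightarrow> nat \<Rightarrow> int" where
  "Phi n F i j = (if i < n \<and> j < n then F (int i) (int j + (if j \<le> i then int n else 0)) else 0)"

lemma lambda_2: "lambda_p 2 = 0" by (simp add: lambda_p_def)
lemma lambda_3: "lambda_p 3 = 1" by (simp add: lambda_p_def cos_60)

lemma mod_lift:
  fixes x y :: int and n :: nat
  assumes n: "n \<ge> 1" and d: "0 < y - x" "y - x \<le> int n"
  defines "i \<equiv> x mod int n" and "j \<equiv> y mod int n"
  defines "j' \<equiv> j + (if j \<le> i then int n else 0)"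
  shows "j' - i = y - x" "x = i + int n * (x div int n)"
proof -
  have x: "x = int n * (x div int n) + i" unfolding i_def by simp
  have y: "y = int n * (y div int n) + j" unfolding j_def by simp
  have i: "0 \<le> i" "i < int n" unfolding i_def using n by simp_all
  have j: "0 \<le> j" "j < int n" unfolding j_def using n by simp_all
  define D where "D = y div int n - x div int n"
  have yx: "y - x = int n * D + (j - i)" unfolding D_def using x y by (simp add: algebra_simps)
  show "j' - i = y - x"
  proof (cases "j \<le> i")
    case True
    have "int n * D > 0" using yx d True by linarith
    then have "D > 0" using n by (simp add: zero_less_mult_iff)
    moreover have "int n * D < int n * 2" using yx d True i j by linarith
    then have "D < 2" using n by (simp add: mult_less_cancel_left)
    ultimately have "D = 1" by simp
    then show ?thesis using yx True unfolding j'_def by simp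
  next
    case False
    have "int n * D > int n * (-1)" using yx d False i j by linarith
    then have "D > -1" using n mult_less_cancel_left[of "int n" "-1" D] by simp
    moreover have "int n * D < int n * 1" using yx d False i j by linarith
    then have "D < 1" using n by (simp add: mult_less_cancel_left)
    ultimately have "D = 0" by simp
    then show ?thesis using yx False unfolding j'_def by simp
  qed
  show "x = i + int n * (x div int n)" using x by simp
qed

lemma Phi_val:
  assumes n: "n \<ge> 1"
    and FG: "\<And>x y. 0 < y - x \<Longrightarrow> y - x \<le> int n \<Longrightarrow> F x y = G a x y"
    and per: "\<And>j. a (j + int n) = a j"
    and d: "0 < y - x" "y - x \<le> int n"
  shows "Phi n F (nat (x mod int n)) (nat (y mod int n)) = G a x y"
proof -
  define i where "i = x mod int n"
  define j where "j = y mod int n"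
  define j' where "j' = j + (if j \<le> i then int n else 0)"
  have L: "j' - i = y - x" "x = i + int n * (x div int n)"
    using mod_lift[OF n d] unfolding i_def j_def j'_def by simp_all
  have i: "0 \<le> i" "i < int n" unfolding i_def using n by simp_all
  have j: "0 \<le> j" "j < int n" unfolding j_def using n by simp_all
  have "Phi n F (nat i) (nat j) = F i j'"
    unfolding Phi_def j'_def using i j by (simp add: nat_less_iff nat_le_eq_zle)
  also have "\<dots> = G a i j'" by (rule FG) (use L d in auto)
  also have "\<dots> = G a (i + int n * (x div int n)) (j' + int n * (x div int n))"
    by (rule G_shift_mult[symmetric]) (rule per)
  also have "\<dots> = G a x y"
  proof -
    have "i + int n * (x div int n) = x" "j' + int n * (x div int n) = y" using L by linarith+
    then show ?thesis by simp
  qed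
  finally show ?thesis unfolding i_def j_def .
qed



locale fwdctx =
  fixes p n :: nat and F :: "int \<Rightarrow> int \<Rightarrow> int"
  assumes p: "p = 2 \<or> p = 3" and n: "n \<ge> 1" and ff: "finite_frieze (p*n) F"
    and gr: "principal_growth F = int p - 2"
begin

abbreviation "qa \<equiv> quiddity F"

lemma N2: "p * n \<ge> 2" using p n by auto

lemma mp: "min_period qa = n" by (rule fwd_period[OF p n ff gr])

lemma per: "qa (j + int n) = qa j"
proof -
  have h: "\<And>i. qa (i + int (p*n)) = qa i" using ff_per[OF ff N2] by simp
  have "qa (j + int (min_period qa)) = qa j" by (rule minper(2)[of "p*n" qa, OF _ h]) (use p n in auto)
  then show ?thesis unfolding mp .
qed

lemma trn: "G qa x (y + int n) + G qa x (y - int n) = (int p - 2) * G qa x y"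
proof -
  have "principal_growth F = G qa 0 (int n + 1) - G qa 1 (int n)"
    using growth_G[of F] mp n by simp
  then show ?thesis using trace_G[of qa "int n", OF per] gr by simp
qed

lemma FG: "0 \<le> y - x \<Longrightarrow> y - x \<le> int p * int n \<Longrightarrow> F x y = G qa x y"
  by (rule ff_G[OF ff N2]) auto

lemma anti: "G qa x (y + int p * int n) = - G qa x y"
  using ff_G_anti(1)[OF ff N2, of x y] by simp

lemma PhiG: "0 < y - x \<Longrightarrow> y - x \<le> int n \<Longrightarrow> Phi n F (nat (x mod int n)) (nat (y mod int n)) = G qa x y"
proof (rule Phi_val[of n F qa, OF n _ per])
  fix x y :: int assume "0 < y - x" "y - x \<le> int n"
  moreover have "int n \<le> int p * int n" using p by auto
  ultimately show "F x y = G qa x y" by (intro FG) (auto intro: order_trans)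
qed

lemma Gshift: "G qa (x + int n * c) (y + int n * c) = G qa x y"
  by (rule G_shift_mult) (rule per)

lemma scv: assumes "x < y" "y < x + int p * int n"
  shows "star_curve_val p n (Phi n F) x y = real_of_int (F x y)"
proof -
  have dd: "(y - x) mod (int p * int n) = y - x" using assms by simp
  have Fxy: "F x y = G qa x y" using FG assms by simp
  have mx: "nat ((x + int p * int n) mod int n) = nat (x mod int n)"
    by simp
  show ?thesis
  proof (cases "y - x \<le> int n")
    case True
    have "Phi n F (nat (x mod int n)) (nat (y mod int n)) = G qa x y" by (rule PhiG) (use True assms in auto)
    then show ?thesis unfolding star_curve_val_def Let_def dd Fxy using True by simp
  next
    case False
    note F1 = False
    show ?thesis
    proof (cases "y - x \<ge> (int p - 1) * int n")
      case True
      have "Phi n F (nat (y mod int n)) (nat ((x + int p * int n) mod int n)) = G qa y (x + int p * int n)"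
        by (rule PhiG) (use True assms in \<open>auto simp: algebra_simps\<close>)
      also have "\<dots> = G qa x y" using anti[of y x] G_anti[of qa x y] by simp
      finally show ?thesis unfolding star_curve_val_def Let_def dd Fxy mx using F1 True by simp
    next
      case False
      have p3: "p = 3" using p F1 False by auto
      have a1: "Phi n F (nat (x mod int n)) (nat ((y - int n) mod int n)) = G qa x (y - int n)"
        by (rule PhiG) (use F1 False p3 in auto)
      have m1: "nat ((y - int n) mod int n) = nat (y mod int n)" by simp
      have a2: "Phi n F (nat (y mod int n)) (nat ((x + 2 * int n) mod int n)) = G qa y (x + 2 * int n)"
        by (rule PhiG) (use F1 False p3 in auto)
      have m2: "nat ((x + 2 * int n) mod int n) = nat (x mod int n)" by simp
      have t: "G qa x (y - int n + int n) + G qa x (y - int n - int n) = G qa x (y - int n)"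
        using trn[of x "y - int n"] p3 by simp
      have s: "G qa (y - 2 * int n + int n * 2) (x + int n * 2) = G qa (y - 2 * int n) x" by (rule Gshift)
      have "G qa x (y - 2 * int n) = - G qa y (x + 2 * int n)"
        using s G_anti[of qa x "y - 2 * int n"] by (simp add: algebra_simps)
      then have "G qa x y = G qa x (y - int n) + G qa y (x + 2 * int n)"
        using t by (simp add: algebra_simps)
      then show ?thesis unfolding star_curve_val_def Let_def dd Fxy
        using F1 False p3 a1 a2 m1 m2 lambda_3 by simp
    qed
  qed
qed

lemma star: "star_frieze p n (Phi n F)"
  unfolding star_frieze_def
proof (intro conjI allI impI)
  show "Phi n F i j = 0" if "\<not> (i < n \<and> j < n)" for i j using that by (auto simp: Phi_def)
  show "Phi n F i (Suc i mod n) = 1" if "i < n" for i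
  proof (cases "Suc i < n")
    case True then show ?thesis using that ff_one[OF ff, of "int i"] by (simp add: Phi_def add.commute)
  next
    case False then have "Suc i = n" using that by simp
    moreover have "int n = int i + 1" using \<open>Suc i = n\<close> by simp
    moreover have "Suc i mod n = 0" using \<open>Suc i = n\<close> by simp
    ultimately show ?thesis using that ff_one[OF ff, of "int i"] by (simp add: Phi_def)
  qed
  show "Phi n F i j > 0" if "i < n \<and> j < n" for i j
  proof -
    have h: "2 * int n \<le> int p * int n" using p n by auto
    have "int j + int n - int i < int p * int n" using h that by linarith
    moreover have "int j - int i < int p * int n" using h that by linarith
    ultimately
    show ?thesis using that by (auto simp: Phi_def intro!: ff_pos[OF ff])
  qed
  show "star_skein p n (Phi n F)" unfolding star_skein_def
  proof (intro allI impI)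
    fix a b c d :: int
    assume h: "a < b \<and> b < c \<and> c < d \<and> d < a + int p * int n \<and> star_is_arc p n (c - a) \<and> star_is_arc p n (d - b)"
    have e: "\<And>x y. x < y \<Longrightarrow> y < x + int p * int n \<Longrightarrow> star_curve_val p n (Phi n F) x y = real_of_int (G qa x y)"
    proof -
      fix x y :: int assume "x < y" "y < x + int p * int n"
      then show "star_curve_val p n (Phi n F) x y = real_of_int (G qa x y)" using scv FG by simp
    qed
    have "G qa a c * G qa b d = G qa a b * G qa c d + G qa a d * G qa b c" by (rule G_plucker)
    then have "real_of_int (G qa a c) * real_of_int (G qa b d) = real_of_int (G qa a b) * real_of_int (G qa c d) + real_of_int (G qa a d) * real_of_int (G qa b c)"
      by (metis of_int_add of_int_mult)
    moreover have "star_curve_val p n (Phi n F) a c = real_of_int (G qa a c)" by (rule e) (use h in auto)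
    moreover have "star_curve_val p n (Phi n F) b d = real_of_int (G qa b d)" by (rule e) (use h in auto)
    moreover have "star_curve_val p n (Phi n F) a b = real_of_int (G qa a b)" by (rule e) (use h in auto)
    moreover have "star_curve_val p n (Phi n F) c d = real_of_int (G qa c d)" by (rule e) (use h in auto)
    moreover have "star_curve_val p n (Phi n F) a d = real_of_int (G qa a d)" by (rule e) (use h in auto)
    moreover have "star_curve_val p n (Phi n F) b c = real_of_int (G qa b c)" by (rule e) (use h in auto)
    ultimately show "star_curve_val p n (Phi n F) a c * star_curve_val p n (Phi n F) b d =
          star_curve_val p n (Phi n F) a b * star_curve_val p n (Phi n F) c d
          + star_curve_val p n (Phi n F) a d * star_curve_val p n (Phi n F) b c"
      by simp
  qed
qed

end



lemma (in fwdctx) F_out: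
  assumes "\<not> (0 < y - x \<and> y - x < int p * int n)"
  shows "F x y = 0"
proof (cases "y = x")
  case True then show ?thesis using ff_zero[OF ff] by simp
next
  case False
  show ?thesis
  proof (cases "y = x + int (p*n)")
    case True then show ?thesis using ff_zeroN[OF ff] by simp
  next
    case False
    have "\<not> (0 \<le> y - x \<and> y - x \<le> int (p*n))" using assms False \<open>y \<noteq> x\<close> by auto
    then show ?thesis by (rule ff_out[OF ff])
  qed
qed

lemma fwd_inj:
  assumes "fwdctx p n F1" "fwdctx p n F2" "Phi n F1 = Phi n F2"
  shows "F1 = F2"
proof (intro ext)
  fix x y
  show "F1 x y = F2 x y"
  proof (cases "0 < y - x \<and> y - x < int p * int n")
    case True
    have "real_of_int (F1 x y) = star_curve_val p n (Phi n F1) x y"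
      using fwdctx.scv[OF assms(1), of x y] True by simp
    also have "\<dots> = star_curve_val p n (Phi n F2) x y" using assms(3) by simp
    also have "\<dots> = real_of_int (F2 x y)" using fwdctx.scv[OF assms(2), of x y] True by simp
    finally show ?thesis by simp
  next
    case False
    then show ?thesis using fwdctx.F_out[OF assms(1), of y x] fwdctx.F_out[OF assms(2), of y x] by simp
  qed
qed

definition SI :: "nat \<Rightarrow> nat \<Rightarrow> (nat \<Rightarrow> nat \<Rightarrow> int) \<Rightarrow> int \<Rightarrow> int \<Rightarrow> int" where
  "SI p n f x y =
     (let d = (y - x) mod (int p * int n); i = nat (x mod int n); j = nat (y mod int n)
      in if d \<le> int n then f i j
         else if d \<ge> (int p - 1) * int n then f j i
         else (int p - 2) * f i j + f j i)"

definition Psi :: "nat \<Rightarrow> nat \<Rightarrow> (nat \<Rightarrow> nat \<Rightarrow> int) \<Rightarrow> int \<Rightarrow> int \<Rightarrow> int" where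
  "Psi p n f x y = (if 0 < y - x \<and> y - x < int p * int n then SI p n f x y else 0)"

lemma SI_real:
  assumes "p = 2 \<or> p = 3"
  shows "real_of_int (SI p n f x y) = star_curve_val p n f x y"
proof -
  have "lambda_p p = real_of_int (int p - 2)" using assms lambda_2 lambda_3 by auto
  then show ?thesis unfolding SI_def star_curve_val_def Let_def by simp
qed



locale bwdctx =
  fixes p n :: nat and f :: "nat \<Rightarrow> nat \<Rightarrow> int"
  assumes p: "p = 2 \<or> p = 3" and n: "n \<ge> 1" and sf: "star_frieze p n f"
begin

abbreviation "FF \<equiv> Psi p n f"
abbreviation "NN \<equiv> int p * int n"

lemma NN2: "2 * int n \<le> NN" using p by auto
lemma NNgt: "int n < NN" "1 < NN" "1 \<le> int n"
proof -
  have "1 \<le> int n" using n by simp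
  then show "int n < NN" "1 < NN" "1 \<le> int n" using NN2 by linarith+
qed

lemma f_out: "\<not> (i < n \<and> j < n) \<Longrightarrow> f i j = 0"
  and f_bnd: "i < n \<Longrightarrow> f i (Suc i mod n) = 1"
  and f_pos: "i < n \<Longrightarrow> j < n \<Longrightarrow> f i j > 0"
  and f_skein: "star_skein p n f"
  using sf unfolding star_frieze_def by auto

lemma bnd: "f (nat (z mod int n)) (nat ((z+1) mod int n)) = 1"
proof -
  define i where "i = nat (z mod int n)"
  have i: "i < n" unfolding i_def using n by (simp add: nat_less_iff)
  have "(z+1) mod int n = (z mod int n + 1) mod int n" by (simp add: mod_add_left_eq)
  also have "nat \<dots> = nat (z mod int n + 1) mod nat (int n)"
    using n by (subst nat_mod_distrib) auto
  also have "\<dots> = Suc i mod n" unfolding i_def using n by (simp add: nat_add_distrib)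
  finally show ?thesis using f_bnd[OF i] unfolding i_def by simp
qed

lemma scvF: "0 < y - x \<Longrightarrow> y - x < NN \<Longrightarrow> star_curve_val p n f x y = real_of_int (FF x y)"
  using SI_real[OF p, of n f x y] by (simp add: Psi_def)

lemma FF_zero: "FF x x = 0" by (simp add: Psi_def)
lemma FF_zeroN: "FF x (x + NN) = 0" by (simp add: Psi_def)
lemma FF_out: "\<not> (0 < y - x \<and> y - x < NN) \<Longrightarrow> FF x y = 0" unfolding Psi_def by auto

lemma FF_in: "0 < y - x \<Longrightarrow> y - x < NN \<Longrightarrow> FF x y = SI p n f x y" by (simp add: Psi_def)

lemma SI_short: "0 < y - x \<Longrightarrow> y - x \<le> int n \<Longrightarrow> SI p n f x y = f (nat (x mod int n)) (nat (y mod int n))"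
proof -
  assume "0 < y - x" "y - x \<le> int n"
  moreover then have "(y - x) mod NN = y - x" using NNgt by (intro mod_pos_pos_trivial; linarith)
  ultimately show ?thesis unfolding SI_def Let_def by simp
qed

lemma SI_long: "int n < y - x \<Longrightarrow> y - x < NN \<Longrightarrow> (int p - 1) * int n \<le> y - x \<Longrightarrow> SI p n f x y = f (nat (y mod int n)) (nat (x mod int n))"
proof -
  assume "int n < y - x" "y - x < NN" "(int p - 1) * int n \<le> y - x"
  moreover then have "(y - x) mod NN = y - x" using NNgt by (intro mod_pos_pos_trivial; linarith)
  ultimately show ?thesis unfolding SI_def Let_def by simp
qed

lemma SI_mid: "int n < y - x \<Longrightarrow> y - x < (int p - 1) * int n \<Longrightarrow> SI p n f x y = (int p - 2) * f (nat (x mod int n)) (nat (y mod int n)) + f (nat (y mod int n)) (nat (x mod int n))"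
proof -
  assume "int n < y - x" "y - x < (int p - 1) * int n"
  moreover then have "(y - x) mod NN = y - x" using NNgt p by (intro mod_pos_pos_trivial) (auto simp: algebra_simps)
  ultimately show ?thesis unfolding SI_def Let_def by simp
qed

lemma FF_one: "FF x (x+1) = 1"
proof -
  have "FF x (x+1) = SI p n f x (x+1)" by (rule FF_in) (use NNgt in auto)
  also have "\<dots> = f (nat (x mod int n)) (nat ((x+1) mod int n))" by (rule SI_short) (use NNgt in auto)
  finally show ?thesis using bnd[of x] by simp
qed

lemma FF_oneN: "FF x (x + NN - 1) = 1"
proof -
  have "FF x (x + NN - 1) = SI p n f x (x + NN - 1)" by (rule FF_in) (use NNgt in auto)
  also have "\<dots> = 1"
  proof (cases "NN - 1 \<le> int n")
    case True
    then have "NN = 2" "n = 1" using NN2 n p by auto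
    have e: "x + NN - 1 = x + 1" using \<open>NN = 2\<close> by simp
    have "SI p n f x (x + 1) = f (nat (x mod int n)) (nat ((x + 1) mod int n))"
      by (rule SI_short) (use True NNgt in auto)
    then show ?thesis unfolding e using bnd[of x] by simp
  next
    case False
    have "SI p n f x (x + NN - 1) = f (nat ((x + NN - 1) mod int n)) (nat (x mod int n))"
      by (rule SI_long) (use False n p in \<open>auto simp: algebra_simps\<close>)
    also have "(x + NN - 1) mod int n = (x - 1) mod int n"
    proof -
      have "(x + NN - 1) mod int n = ((x - 1) + int p * int n) mod int n" by (simp add: algebra_simps)
      also have "\<dots> = (x - 1) mod int n" by (rule mod_mult_self1)
      finally show ?thesis .
    qed
    also have "x mod int n = ((x - 1) + 1) mod int n" by simp
    finally show ?thesis using bnd[of "x - 1"] by simp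
  qed
  finally show ?thesis .
qed

lemma FF_pos: "0 < y - x \<Longrightarrow> y - x < NN \<Longrightarrow> FF x y > 0"
proof -
  assume h: "0 < y - x" "y - x < NN"
  have i: "nat (x mod int n) < n" "nat (y mod int n) < n" using n by (simp_all add: nat_less_iff)
  have "int p - 2 \<ge> 0" using p by auto
  then have "SI p n f x y > 0" unfolding SI_def Let_def using f_pos[OF i] f_pos[OF i(2) i(1)]
    by (auto intro: add_nonneg_pos mult_nonneg_nonneg less_imp_le)
  then show ?thesis using FF_in h by simp
qed

lemma FF_shift: "FF (x + int n) (y + int n) = FF x y"
  unfolding Psi_def SI_def Let_def by (simp add: algebra_simps)

end



context bwdctx
begin

lemma FF_det: assumes h: "1 \<le> j - i" "j - i \<le> int n"
  shows "FF i j * FF (i+1) (j+1) - FF (i+1) j * FF i (j+1) = 1"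
proof (cases "j = i + 1")
  case True
  have "FF (i+1) (i+1+1) = 1" by (rule FF_one)
  then show ?thesis using True FF_one[of i] FF_zero[of "i+1"] by simp
next
  case False
  have n2: "int n + 1 < NN" using NN2 h False by linarith
  have sk: "star_curve_val p n f i j * star_curve_val p n f (i+1) (j+1) =
          star_curve_val p n f i (i+1) * star_curve_val p n f j (j+1)
          + star_curve_val p n f i (j+1) * star_curve_val p n f (i+1) j"
    using f_skein h False n2 unfolding star_skein_def star_is_arc_def
    by (elim allE[of _ i] allE[of _ "i+1"] allE[of _ j] allE[of _ "j+1"]) auto
  have e1: "star_curve_val p n f i j = real_of_int (FF i j)" by (rule scvF) (use h False n2 in auto)
  have e2: "star_curve_val p n f (i+1) (j+1) = real_of_int (FF (i+1) (j+1))" by (rule scvF) (use h False n2 in auto)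
  have e3: "star_curve_val p n f i (i+1) = real_of_int (FF i (i+1))" by (rule scvF) (use h False n2 in auto)
  have e4: "star_curve_val p n f j (j+1) = real_of_int (FF j (j+1))" by (rule scvF) (use h False n2 in auto)
  have e5: "star_curve_val p n f i (j+1) = real_of_int (FF i (j+1))" by (rule scvF) (use h False n2 in auto)
  have e6: "star_curve_val p n f (i+1) j = real_of_int (FF (i+1) j)" by (rule scvF) (use h False n2 in auto)
  have "real_of_int (FF i j * FF (i+1) (j+1)) = real_of_int (1 + FF i (j+1) * FF (i+1) j)"
    using sk unfolding e1 e2 e3 e4 e5 e6 FF_one by simp
  then have "FF i j * FF (i+1) (j+1) = 1 + FF i (j+1) * FF (i+1) j" by (rule of_int_eq_iff[THEN iffD1])
  then show ?thesis by (simp add: algebra_simps)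
qed

abbreviation "ba \<equiv> quiddity FF"

lemma FF_tame: "0 \<le> y - x \<Longrightarrow> y - x \<le> int n + 1 \<Longrightarrow> FF x y = G ba x y"
proof -
  assume h: "0 \<le> y - x" "y - x \<le> int n + 1"
  have "FF x (x + int (nat (y - x))) = G ba x (x + int (nat (y - x)))"
  proof (rule frieze_tame[of FF "int n"])
    show "FF x x = 0" for x by (rule FF_zero)
    show "FF x (x+1) = 1" for x by (rule FF_one)
    show "FF i j * FF (i + 1) (j + 1) - FF (i + 1) j * FF i (j + 1) = 1" if "1 \<le> j - i" "j - i \<le> int n" for i j
      using FF_det that by simp
    show "0 < FF i j" if "1 \<le> j - i" "j - i \<le> int n - 1" for i j
      by (rule FF_pos; insert that NNgt; linarith)
    show "int (nat (y - x)) \<le> int n + 1" using h by simp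
  qed
  then show ?thesis using h by simp
qed

lemma ba_per: "ba (j + int n) = ba j"
  unfolding quiddity_def using FF_shift[of "j - 1" "j + 1"] by (simp add: algebra_simps)

lemma tn: "G ba 0 (int n + 1) - G ba 1 (int n) = int p - 2"
proof -
  have a: "G ba 0 (int n + 1) = FF 0 (int n + 1)" by (rule FF_tame[symmetric]) auto
  have b: "G ba 1 (int n) = FF 1 (int n)" by (rule FF_tame[symmetric]) (use NNgt in auto)
  show ?thesis
  proof (cases "n = 1")
    case True
    have "FF 1 1 = 0" by (rule FF_zero)
    moreover have "FF 0 2 = int p - 2"
    proof (cases "p = 2")
      case True
      have "FF 0 2 = 0" by (rule FF_out) (use True \<open>n = 1\<close> in simp)
      then show ?thesis using True by simp
    next
      case False
      then have p3: "p = 3" using p by simp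
      have "FF 0 2 = SI p n f 0 2" by (rule FF_in) (use p3 \<open>n = 1\<close> in auto)
      also have "\<dots> = f (nat (2 mod int n)) (nat (0 mod int n))" by (rule SI_long) (use p3 \<open>n = 1\<close> in auto)
      also have "\<dots> = 1" using bnd[of 0] \<open>n = 1\<close> by simp
      finally show ?thesis using p3 by simp
    qed
    ultimately show ?thesis using a b True by simp
  next
    case False
    then have n2: "n \<ge> 2" using n by simp
    have f01: "f 0 1 = 1" using f_bnd[of 0] n2 by simp
    have n2i: "int n \<ge> 2" using n2 by simp
    have m1: "nat (1 mod int n) = 1" "nat ((int n + 1) mod int n) = 1" using n2 by simp_all
    have "FF 1 (int n) = SI p n f 1 (int n)" by (rule FF_in; insert n2i NNgt; linarith)
    also have "\<dots> = f (nat (1 mod int n)) (nat (int n mod int n))" by (rule SI_short) (use n2 in auto)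
    finally have c: "FF 1 (int n) = f 1 0" using m1 by simp
    have "FF 0 (int n + 1) = SI p n f 0 (int n + 1)" by (rule FF_in; insert n2i NN2; linarith)
    also have "\<dots> = int p - 2 + f 1 0"
    proof (cases "p = 2")
      case True
      have "SI p n f 0 (int n + 1) = f (nat ((int n + 1) mod int n)) (nat (0 mod int n))"
        by (rule SI_long) (use True n2 in auto)
      then show ?thesis using m1 True by simp
    next
      case False
      then have p3: "p = 3" using p by simp
      have "SI p n f 0 (int n + 1) = (int p - 2) * f (nat (0 mod int n)) (nat ((int n + 1) mod int n)) + f (nat ((int n + 1) mod int n)) (nat (0 mod int n))"
        by (rule SI_mid) (use p3 n2 in auto)
      then show ?thesis using m1 p3 f01 by simp
    qed
    finally show ?thesis using a b c by simp
  qed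
qed

lemma trn: "G ba x (y + int n) + G ba x (y - int n) = (int p - 2) * G ba x y"
  using trace_G[of ba "int n", OF ba_per] tn by simp

lemma antiX: "X ba (j + NN) = - X ba j" and antiY: "Y ba (j + NN) = - Y ba j"
proof -
  have tx: "X ba (j + int n) + X ba (j - int n) = (int p - 2) * X ba j" for j
    using trace_XY(1)[of ba "int n", OF ba_per] tn by simp
  have ty: "Y ba (j + int n) + Y ba (j - int n) = (int p - 2) * Y ba j" for j
    using trace_XY(2)[of ba "int n", OF ba_per] tn by simp
  from p show "X ba (j + NN) = - X ba j"
  proof
    assume p2: "p = 2"
    show ?thesis using tx[of "j + int n"] p2 by (simp add: algebra_simps)
  next
    assume p3: "p = 3"
    have "X ba (j + 3 * int n) = X ba (j + 2 * int n) - X ba (j + int n)"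
      using tx[of "j + 2 * int n"] p3 by (simp add: algebra_simps)
    moreover have "X ba (j + 2 * int n) = X ba (j + int n) - X ba j"
      using tx[of "j + int n"] p3 by (simp add: algebra_simps)
    ultimately show ?thesis using p3 by simp
  qed
  from p show "Y ba (j + NN) = - Y ba j"
  proof
    assume p2: "p = 2"
    show ?thesis using ty[of "j + int n"] p2 by (simp add: algebra_simps)
  next
    assume p3: "p = 3"
    have "Y ba (j + 3 * int n) = Y ba (j + 2 * int n) - Y ba (j + int n)"
      using ty[of "j + 2 * int n"] p3 by (simp add: algebra_simps)
    moreover have "Y ba (j + 2 * int n) = Y ba (j + int n) - Y ba j"
      using ty[of "j + int n"] p3 by (simp add: algebra_simps)
    ultimately show ?thesis using p3 by simp
  qed
qed

lemma antiG: "G ba x (y + NN) = - G ba x y"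
  unfolding G_def antiX antiY by simp

end



context bwdctx
begin

lemma Gshift: "G ba (x + int n * c) (y + int n * c) = G ba x y"
  by (rule G_shift_mult) (rule ba_per)

lemma FG: assumes h: "0 \<le> y - x" "y - x \<le> NN" shows "FF x y = G ba x y"
proof (cases "y - x \<le> int n + 1")
  case True then show ?thesis using FF_tame h by simp
next
  case F1: False
  show ?thesis
  proof (cases "y - x = NN")
    case True
    then have y: "y = x + NN" by simp
    show ?thesis unfolding y FF_zeroN antiG by simp
  next
    case F2: False
    show ?thesis
    proof (cases "(int p - 1) * int n \<le> y - x")
      case True
      have "FF x y = SI p n f x y" by (rule FF_in) (use F1 F2 h in auto)
      also have "\<dots> = f (nat (y mod int n)) (nat (x mod int n))"
        by (rule SI_long) (use F1 F2 h True in auto)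
      also have "\<dots> = f (nat (y mod int n)) (nat ((x + NN) mod int n))" by simp
      also have "\<dots> = SI p n f y (x + NN)"
        by (rule SI_short[symmetric]) (use F1 F2 h True in \<open>auto simp: algebra_simps\<close>)
      also have "\<dots> = FF y (x + NN)" by (rule FF_in[symmetric]) (use F1 F2 h True NNgt in auto)
      also have "\<dots> = G ba y (x + NN)" by (rule FF_tame) (use F1 F2 h True in \<open>auto simp: algebra_simps\<close>)
      also have "\<dots> = G ba x y" using antiG[of y x] G_anti[of ba x y] by simp
      finally show ?thesis .
    next
      case False
      have p3: "p = 3" using p False F1 by auto
      have "FF x y = SI p n f x y" by (rule FF_in) (use F1 F2 h in auto)
      also have "\<dots> = f (nat (x mod int n)) (nat (y mod int n)) + f (nat (y mod int n)) (nat (x mod int n))"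
      proof -
        have "SI p n f x y = (int p - 2) * f (nat (x mod int n)) (nat (y mod int n)) + f (nat (y mod int n)) (nat (x mod int n))"
          by (rule SI_mid) (use F1 False p3 in auto)
        then show ?thesis using p3 by simp
      qed
      also have "f (nat (x mod int n)) (nat (y mod int n)) = f (nat (x mod int n)) (nat ((y - int n) mod int n))"
        by simp
      also have "\<dots> = SI p n f x (y - int n)" by (rule SI_short[symmetric]) (use F1 False p3 in auto)
      also have "\<dots> = FF x (y - int n)" by (rule FF_in[symmetric]) (use F1 False p3 in auto)
      also have "\<dots> = G ba x (y - int n)" by (rule FF_tame) (use F1 False p3 in auto)
      also have "f (nat (y mod int n)) (nat (x mod int n)) = f (nat (y mod int n)) (nat ((x + 2 * int n) mod int n))"
        by simp
      also have "\<dots> = SI p n f y (x + 2 * int n)" by (rule SI_short[symmetric]) (use F1 False p3 in auto)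
      also have "\<dots> = FF y (x + 2 * int n)" by (rule FF_in[symmetric]) (use F1 False p3 in auto)
      also have "\<dots> = G ba y (x + 2 * int n)" by (rule FF_tame) (use F1 False p3 in auto)
      also have "G ba x (y - int n) + G ba y (x + 2 * int n) = G ba x y"
      proof -
        have t: "G ba x (y - int n + int n) + G ba x (y - int n - int n) = G ba x (y - int n)"
          using trn[of x "y - int n"] p3 by simp
        have s: "G ba (y - 2 * int n + int n * 2) (x + int n * 2) = G ba (y - 2 * int n) x" by (rule Gshift)
        have "G ba x (y - 2 * int n) = - G ba y (x + 2 * int n)"
          using s G_anti[of ba x "y - 2 * int n"] by (simp add: algebra_simps)
        then show ?thesis using t by (simp add: algebra_simps)
      qed
      finally show ?thesis .
    qed
  qed
qed

lemma ffF: "finite_frieze (p*n) FF"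
  unfolding finite_frieze_def of_nat_mult
proof (intro conjI allI impI)
  fix i j :: int
  show "\<not> (0 \<le> j - i \<and> j - i \<le> NN) \<Longrightarrow> FF i j = 0" by (rule FF_out) auto
  show "FF i i = 0" by (rule FF_zero)
  show "FF i (i + NN) = 0" by (rule FF_zeroN)
  show "FF i (i + 1) = 1" by (rule FF_one)
  show "FF i (i + NN - 1) = 1" by (rule FF_oneN)
  show "0 < j - i \<and> j - i < NN \<Longrightarrow> 0 < FF i j" using FF_pos by auto
  assume h: "i + 1 \<le> j \<and> j \<le> i + NN - 1"
  have a: "FF i j = G ba i j" by (rule FG) (use h in auto)
  have b: "FF (i+1) (j+1) = G ba (i+1) (j+1)" by (rule FG) (use h in auto)
  have c: "FF (i+1) j = G ba (i+1) j" by (rule FG) (use h in auto)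
  have d: "FF i (j+1) = G ba i (j+1)" by (rule FG) (use h in auto)
  have "G ba i j * G ba (i+1) (j+1) = G ba i (i+1) * G ba j (j+1) + G ba i (j+1) * G ba (i+1) j"
    by (rule G_plucker)
  then show "FF i j * FF (i + 1) (j + 1) - FF (i + 1) j * FF i (j + 1) = 1"
    unfolding a b c d G_wronski by (simp add: algebra_simps)
qed

lemma mpF: "min_period ba = n"
proof (rule ccontr)
  assume ne: "min_period ba \<noteq> n"
  define q where "q = min_period ba"
  have q0: "0 < q" and perq: "\<And>i. ba (i + int q) = ba i" and qd: "q dvd n"
    using minper[of n ba, OF _ ba_per] n unfolding q_def by auto
  obtain k where k: "n = q * k" using qd by blast
  have "k \<noteq> 1" using k ne unfolding q_def by auto
  moreover have "k \<noteq> 0" using k n by auto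
  ultimately have "k \<ge> 2" by simp
  then have q2: "2 * int q \<le> int n" using k
    by (metis mult.commute mult_le_mono2 of_nat_le_iff of_nat_mult of_nat_numeral)
  have qpos: "1 \<le> int q" using q0 by simp
  define t where "t = G ba 0 (int q + 1) - G ba 1 (int q)"
  have tr: "G ba x (y + int q) + G ba x (y - int q) = t * G ba x y" for x y
    unfolding t_def by (rule trace_G[of ba "int q", OF perq])
  define s where "s m = G ba 0 (int m * int q)" for m :: nat
  have s0: "s 0 = 0" unfolding s_def by simp
  have srec: "s (Suc (Suc m)) = t * s (Suc m) - s m" for m
  proof -
    have "G ba 0 (int (Suc m) * int q + int q) + G ba 0 (int (Suc m) * int q - int q) = t * G ba 0 (int (Suc m) * int q)"
      by (rule tr)
    moreover have "int (Suc m) * int q + int q = int (Suc (Suc m)) * int q" "int (Suc m) * int q - int q = int m * int q"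
      by (simp_all add: algebra_simps)
    ultimately show ?thesis unfolding s_def by simp
  qed
  have spos: "s m > 0" if "0 < int m * int q" "int m * int q < NN" for m
  proof -
    have "FF 0 (int m * int q) = G ba 0 (int m * int q)" by (rule FG) (use that in auto)
    moreover have "FF 0 (int m * int q) > 0" by (rule FF_pos) (use that in auto)
    ultimately show ?thesis unfolding s_def by simp
  qed
  have e123: "int 1 * int q = int q" "int 2 * int q = 2 * int q" "int 3 * int q = 3 * int q" by simp_all
  have s1: "s 1 > 0" by (rule spos) (insert qpos q2 NN2 NNgt e123, linarith)+
  have s2: "s 2 > 0" by (rule spos) (insert qpos q2 NN2 NNgt e123, linarith)+
  have s3: "s 3 > 0" by (rule spos) (insert qpos q2 NN2 NNgt e123, linarith)+
  have "s 2 = t * s 1" using srec[of 0] s0 by (simp add: numeral_2_eq_2)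
  then have tpos: "t > 0" using s1 s2 by (simp add: zero_less_mult_iff)
  have "s 3 = t * s 2 - s 1" using srec[of 1] by (simp add: numeral_3_eq_3 numeral_2_eq_2)
  then have "t \<noteq> 1" using s1 s2 s3 \<open>s 2 = t * s 1\<close> by auto
  with tpos have t2: "t \<ge> 2" by simp
  have mono: "0 \<le> s m \<and> s m \<le> s (Suc m)" for m
  proof (induction m)
    case 0 then show ?case using s0 s1 by simp
  next
    case (Suc m)
    have "t * s (Suc m) \<ge> 2 * s (Suc m)" using t2 Suc by (intro mult_right_mono) auto
    then show ?case using Suc srec[of m] by simp
  qed
  have big: "s (Suc m) \<ge> s 1" for m
  proof (induction m)
    case (Suc m) then show ?case using mono[of "Suc m"] by simp
  qed simp
  obtain k' where k': "int p * int n = int (Suc k') * int q"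
  proof -
    have "int p * int n = int (p * k) * int q" using k by simp
    moreover have "p * k \<ge> 1" using p \<open>k \<ge> 2\<close> by auto
    ultimately show ?thesis using that[of "p * k - 1"] by simp
  qed
  have "s (Suc k') = 0" unfolding s_def k'[symmetric] using antiG[of 0 0] by simp
  with big[of k'] s1 show False by simp
qed

lemma growthF: "principal_growth FF = int p - 2"
  using growth_G[of FF] mpF n tn by simp

lemma PhiF: "Phi n FF = f"
proof (intro ext)
  fix i j
  show "Phi n FF i j = f i j"
  proof (cases "i < n \<and> j < n")
    case True
    define j' where "j' = int j + (if j \<le> i then int n else 0)"
    have r: "0 < j' - int i" "j' - int i \<le> int n" unfolding j'_def using True by auto
    have "Phi n FF i j = FF (int i) j'" unfolding Phi_def j'_def using True by simp
    also have "\<dots> = SI p n f (int i) j'" by (rule FF_in) (use r NNgt in linarith)+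
    also have "\<dots> = f (nat (int i mod int n)) (nat (j' mod int n))" by (rule SI_short) (use r in auto)
    also have "\<dots> = f i j" unfolding j'_def using True by (auto simp: nat_mod_distrib nat_int_add)
    finally show ?thesis .
  next
    case False then show ?thesis using f_out[of i j] by (auto simp: Phi_def)
  qed
qed

end



lemma main_bij:
  assumes p: "p = 2 \<or> p = 3" and n: "n \<ge> 1"
  shows "\<exists>g. bij_betw g {F. finite_frieze (p * n) F \<and> principal_growth F = int p - 2}
                         {f. star_frieze p n f}"
proof (intro exI[of _ "Phi n"])
  let ?A = "{F. finite_frieze (p * n) F \<and> principal_growth F = int p - 2}"
  let ?B = "{f. star_frieze p n f}"
  have fc: "fwdctx p n F" if "F \<in> ?A" for F
    using that p n by (auto simp: fwdctx_def)
  show "bij_betw (Phi n) ?A ?B"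
    unfolding bij_betw_def
  proof (intro conjI)
    show "inj_on (Phi n) ?A"
      by (rule inj_onI) (rule fwd_inj[OF fc fc])
    show "Phi n ` ?A = ?B"
    proof
      show "Phi n ` ?A \<subseteq> ?B" using fwdctx.star[OF fc] by auto
      show "?B \<subseteq> Phi n ` ?A"
      proof
        fix f assume "f \<in> ?B"
        then have bc: "bwdctx p n f" using p n by (simp add: bwdctx_def)
        have "Psi p n f \<in> ?A" using bwdctx.ffF[OF bc] bwdctx.growthF[OF bc] by simp
        moreover have "Phi n (Psi p n f) = f" by (rule bwdctx.PhiF[OF bc])
        ultimately show "f \<in> Phi n ` ?A" by (metis image_eqI)
      qed
    qed
  qed
qed

theorem corollary4p32:
  fixes n :: nat
  assumes "n \<ge> 1"
  shows "(\<exists>g. bij_betw g {F. finite_frieze (2 * n) F \<and> principal_growth F = 0}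
                         {f. star_frieze 2 n f})
       \<and> (\<exists>g. bij_betw g {F. finite_frieze (3 * n) F \<and> principal_growth F = 1}
                         {f. star_frieze 3 n f})"
proof
  show "\<exists>g. bij_betw g {F. finite_frieze (2 * n) F \<and> principal_growth F = 0} {f. star_frieze 2 n f}"
    using main_bij[of 2 n] assms by simp
  show "\<exists>g. bij_betw g {F. finite_frieze (3 * n) F \<and> principal_growth F = 1} {f. star_frieze 3 n f}"
    using main_bij[of 3 n] assms by simp
qed


end
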